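(* Let $\gamma_a,\gamma_s>0$, $\lambda\ge0$, $q>0$, $\sigma_B>0$, $\varepsilon_a>0$, and let $\beta_a,\beta_s:\mathbb R\to\mathbb R$ be globally Lipschitz continuous with $\beta_a\ge0$, $\beta_s>0$. Consider the maximal solution $(T_a,T_s)$ of \[ \begin{cases} \gamma_a T_a'=-\lambda(T_a-T_s)+\varepsilon_a\sigma_B|T_s|^3T_s-2\varepsilon_a\sigma_B|T_a|^3T_a+q\beta_a(T_a),\\ \gamma_s T_s'=-\lambda(T_s-T_a)-\sigma_B|T_s|^3T_s+\varepsilon_a\sigma_B|T_a|^3T_a+q\beta_s(T_s),\\ T_a(0)=T_a^{(0)},\quad T_s(0)=T_s^{(0)} \end{cases} \] with $T_a^{(0)}\ge0$ and $T_s^{(0)}\ge0$. Then for every positive time $t$ at which the solution exists, $T_a(t)>0$ and $T_s(t)>0$. *)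

theory Defs
  imports "HOL-Analysis.Analysis"
begin

end

theory Submission
  imports Defs
begin

lemma min_lemma:
  fixes f :: "real \<Rightarrow> real"
  assumes c: "continuous_on {a..b} f" and ab: "a < b" "0 \<le> a" "b \<le> t" and fa: "f a \<ge> 0"
    and d: "\<And>u. u \<in> {a<..b} \<Longrightarrow> f u \<le> 0 \<Longrightarrow> \<exists>D>0. (f has_real_derivative D) (at u within {0..t})"
  shows "f b > 0"
proof (rule ccontr)
  assume nb: "\<not> f b > 0"
  obtain u0 where u0: "u0 \<in> {a..b}" "\<And>x. x \<in> {a..b} \<Longrightarrow> f u0 \<le> f x"
    using continuous_attains_inf[OF compact_Icc _ c] ab by fastforce
  define u where "u = (if u0 = a then b else u0)"
  have u: "u \<in> {a<..b}" "\<And>x. x \<in> {a..b} \<Longrightarrow> f u \<le> f x"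
    using u0 ab nb fa unfolding u_def by (auto, smt (verit) atLeastAtMost_iff)
  have "f u \<le> f b" using u(2)[of b] ab by simp
  then have "f u \<le> 0" using nb by simp
  then obtain D where D: "D > 0" "(f has_real_derivative D) (at u within {0..t})" using d u by blast
  obtain e where e: "e > 0" "\<And>h. h > 0 \<Longrightarrow> u - h \<in> {0..t} \<Longrightarrow> h < e \<Longrightarrow> f (u - h) < f u"
    using has_real_derivative_pos_inc_left[OF D(2) D(1)] by blast
  define h where "h = min (e/2) ((u - a)/2)"
  have h0: "h > 0" "h < e" using e(1) u(1) unfolding h_def by auto
  have "h \<le> (u-a)/2" unfolding h_def by (rule min.cobounded2)
  note h0 = h0 this
  have h: "h > 0" "h < e" "u - h \<in> {a..b}" using h0 u by auto
  have "u - h \<in> {0..t}" using h ab by auto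
  then have "f (u - h) < f u" using e h by blast
  with u(2)[OF h(3)] show False by simp
qed

lemma pos_near:
  fixes f :: "real \<Rightarrow> real"
  assumes "continuous (at x within S) f" "f x > 0"
  shows "\<exists>d>0. \<forall>y\<in>S. dist y x < d \<longrightarrow> f y > 0"
proof -
  have "(f \<longlongrightarrow> f x) (at x within S)" using assms(1) by (simp add: continuous_within)
  then have "eventually (\<lambda>y. 0 < f y) (at x within S)" using order_tendstoD(1) assms(2) by blast
  then obtain d where "d > 0" "\<forall>y\<in>S. y \<noteq> x \<and> dist y x < d \<longrightarrow> 0 < f y"
    unfolding eventually_at by blast
  then show ?thesis using assms(2) by metis
qed

lemma nonneg_left:
  fixes f :: "real \<Rightarrow> real"
  assumes "continuous_on {a..b} f" "a < b" "\<And>x. x \<in> {a<..<b} \<Longrightarrow> f x > 0"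
  shows "f b \<ge> 0"
  using continuous_ge_on_closure[of "{a<..<b}" f b 0] assms by fastforce

theorem lemma4p1:
  fixes \<gamma>a \<gamma>s lam q \<sigma>B \<epsilon>a Ta0 Ts0 t :: real
    and \<beta>a \<beta>s Ta Ts :: "real \<Rightarrow> real"
  assumes "\<gamma>a > 0" "\<gamma>s > 0" "lam \<ge> 0" "q > 0" "\<sigma>B > 0" "\<epsilon>a > 0"
    and "\<exists>L. L-lipschitz_on UNIV \<beta>a" "\<exists>L. L-lipschitz_on UNIV \<beta>s"
    and "\<And>x. \<beta>a x \<ge> 0" "\<And>x. \<beta>s x > 0"
    and "Ta0 \<ge> 0" "Ts0 \<ge> 0"
    and "t > 0"
    and "Ta 0 = Ta0" "Ts 0 = Ts0"
    and "\<And>s. s \<in> {0..t} \<Longrightarrow>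
      (\<exists>D. (Ta has_real_derivative D) (at s within {0..t}) \<and> \<gamma>a * D =
         (- lam * (Ta s - Ts s) + \<epsilon>a * \<sigma>B * \<bar>Ts s\<bar>^3 * Ts s
          - 2 * \<epsilon>a * \<sigma>B * \<bar>Ta s\<bar>^3 * Ta s + q * \<beta>a (Ta s)))"
    and "\<And>s. s \<in> {0..t} \<Longrightarrow>
      (\<exists>D. (Ts has_real_derivative D) (at s within {0..t}) \<and> \<gamma>s * D =
         (- lam * (Ts s - Ta s) - \<sigma>B * \<bar>Ts s\<bar>^3 * Ts s
          + \<epsilon>a * \<sigma>B * \<bar>Ta s\<bar>^3 * Ta s + q * \<beta>s (Ts s)))"
  shows "Ta t > 0 \<and> Ts t > 0"
  proof -
  have contTa: "continuous_on {0..t} Ta" and contTs: "continuous_on {0..t} Ts"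
    using assms(16,17) DERIV_continuous by (fastforce simp: continuous_on_eq_continuous_within)+
  have KTs: "\<exists>D>0. (Ts has_real_derivative D) (at u within {0..t})"
    if u: "u \<in> {0..t}" "Ts u \<le> 0" "Ta u \<ge> 0" for u
  proof -
    obtain D where D: "(Ts has_real_derivative D) (at u within {0..t})" "\<gamma>s * D =
         (- lam * (Ts u - Ta u) - \<sigma>B * \<bar>Ts u\<bar>^3 * Ts u
          + \<epsilon>a * \<sigma>B * \<bar>Ta u\<bar>^3 * Ta u + q * \<beta>s (Ts u))" using assms(17)[OF u(1)] by blast
    have t1: "- lam * (Ts u - Ta u) \<ge> 0" using assms(3) u by (intro mult_nonpos_nonpos) auto
    have "\<sigma>B * \<bar>Ts u\<bar>^3 \<ge> 0" using assms(5) by simp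
    then have t2: "\<sigma>B * \<bar>Ts u\<bar>^3 * Ts u \<le> 0" by (rule mult_nonneg_nonpos[OF _ u(2)])
    have t3: "\<epsilon>a * \<sigma>B * \<bar>Ta u\<bar>^3 * Ta u \<ge> 0" using assms(5,6) u by simp
    have t4: "q * \<beta>s (Ts u) > 0" using assms(4,10) by simp
    have "\<gamma>s * D > 0" using D(2) t1 t2 t3 t4 by linarith
    then have "D > 0" using assms(2) zero_less_mult_pos by blast
    then show ?thesis using D(1) by blast
  qed
  have KTa: "\<exists>D>0. (Ta has_real_derivative D) (at u within {0..t})"
    if u: "u \<in> {0..t}" "Ta u \<le> 0" "Ts u > 0" for u
  proof -
    obtain D where D: "(Ta has_real_derivative D) (at u within {0..t})" "\<gamma>a * D =
         (- lam * (Ta u - Ts u) + \<epsilon>a * \<sigma>B * \<bar>Ts u\<bar>^3 * Ts u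
          - 2 * \<epsilon>a * \<sigma>B * \<bar>Ta u\<bar>^3 * Ta u + q * \<beta>a (Ta u))" using assms(16)[OF u(1)] by blast
    have t1: "- lam * (Ta u - Ts u) \<ge> 0" using assms(3) u by (intro mult_nonpos_nonpos) auto
    have "2 * \<epsilon>a * \<sigma>B * \<bar>Ta u\<bar>^3 \<ge> 0" using assms(5,6) by simp
    then have t2: "2 * \<epsilon>a * \<sigma>B * \<bar>Ta u\<bar>^3 * Ta u \<le> 0" by (rule mult_nonneg_nonpos[OF _ u(2)])
    have t3: "\<epsilon>a * \<sigma>B * \<bar>Ts u\<bar>^3 * Ts u > 0" using assms(5,6) u by simp
    have t4: "q * \<beta>a (Ta u) \<ge> 0" using assms(4,9) by simp
    have "\<gamma>a * D > 0" using D(2) t1 t2 t3 t4 by linarith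
    then have "D > 0" using assms(1) zero_less_mult_pos by blast
    then show ?thesis using D(1) by blast
  qed
  show ?thesis
  proof (rule ccontr)
    assume neg: "\<not> (Ta t > 0 \<and> Ts t > 0)"
    define B where "B = {v\<in>{0<..t}. \<not> (Ta v > 0 \<and> Ts v > 0)}"
    have tB: "t \<in> B" using neg assms(13) unfolding B_def by auto
    have bdd: "bdd_below B" unfolding B_def by (rule bdd_belowI[of _ 0]) auto
    define \<tau> where "\<tau> = Inf B"
    have \<tau>0: "0 \<le> \<tau>" unfolding \<tau>_def using tB by (intro cInf_greatest) (auto simp: B_def)
    have \<tau>t: "\<tau> \<le> t" unfolding \<tau>_def using tB bdd by (rule cInf_lower)
    have good: "Ta v > 0 \<and> Ts v > 0" if "0 < v" "v < \<tau>" for v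
    proof (rule ccontr)
      assume "\<not> (Ta v > 0 \<and> Ts v > 0)"
      then have "v \<in> B" using that \<tau>t unfolding B_def by auto
      then have "\<tau> \<le> v" unfolding \<tau>_def using bdd by (rule cInf_lower)
      then show False using that by simp
    qed
    have nn: "Ta \<tau> \<ge> 0 \<and> Ts \<tau> \<ge> 0"
    proof (cases "\<tau> = 0")
      case True then show ?thesis using assms(11,12,14,15) by simp
    next
      case False
      then have p: "0 < \<tau>" using \<tau>0 by simp
      have "Ta \<tau> \<ge> 0" using nonneg_left[of 0 \<tau> Ta] continuous_on_subset[OF contTa] p \<tau>t good by fastforce
      moreover have "Ts \<tau> \<ge> 0" using nonneg_left[of 0 \<tau> Ts] continuous_on_subset[OF contTs] p \<tau>t good by fastforce
      ultimately show ?thesis by simp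
    qed
    show False
    proof (cases "\<tau> \<in> B")
      case True
      then have p: "0 < \<tau>" "\<tau> \<le> t" and bad: "\<not> (Ta \<tau> > 0 \<and> Ts \<tau> > 0)" unfolding B_def by auto
      have sub: "{\<tau>/2..\<tau>} \<subseteq> {0..t}" using p by auto
      show False
      proof (cases "Ts \<tau> \<le> 0")
        case True
        have "Ts \<tau> > 0"
        proof (rule min_lemma[where a="\<tau>/2" and b=\<tau> and t=t])
          show "continuous_on {\<tau>/2..\<tau>} Ts" using continuous_on_subset[OF contTs sub] .
          show "\<tau>/2 < \<tau>" "0 \<le> \<tau>/2" "\<tau> \<le> t" using p by auto
          show "Ts (\<tau>/2) \<ge> 0" using good[of "\<tau>/2"] p by simp
          fix w assume w: "w \<in> {\<tau>/2<..\<tau>}" "Ts w \<le> 0"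
          then have "w = \<tau>" using good[of w] p by force
          then show "\<exists>D>0. (Ts has_real_derivative D) (at w within {0..t})"
            using KTs[of \<tau>] p True nn by auto
        qed
        then show False using True by simp
      next
        case False
        then have ta: "Ta \<tau> \<le> 0" using bad by simp
        have "Ta \<tau> > 0"
        proof (rule min_lemma[where a="\<tau>/2" and b=\<tau> and t=t])
          show "continuous_on {\<tau>/2..\<tau>} Ta" using continuous_on_subset[OF contTa sub] .
          show "\<tau>/2 < \<tau>" "0 \<le> \<tau>/2" "\<tau> \<le> t" using p by auto
          show "Ta (\<tau>/2) \<ge> 0" using good[of "\<tau>/2"] p by simp
          fix w assume w: "w \<in> {\<tau>/2<..\<tau>}" "Ta w \<le> 0"
          then have "w = \<tau>" using good[of w] p by force
          then show "\<exists>D>0. (Ta has_real_derivative D) (at w within {0..t})"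
            using KTa[of \<tau>] p False ta by auto
        qed
        then show False using ta by simp
      qed
    next
      case False
      have \<tau>lt: "\<tau> < t" using False tB \<tau>t by (cases "\<tau> = t") auto
      obtain d1 where d1: "d1 > 0" "\<And>v. \<tau> < v \<Longrightarrow> v < \<tau> + d1 \<Longrightarrow> v \<le> t \<Longrightarrow> Ts v > 0"
      proof (cases "Ts \<tau> > 0")
        case True
        have "continuous (at \<tau> within {0..t}) Ts"
          using contTs \<tau>0 \<tau>t by (simp add: continuous_on_eq_continuous_within)
        from pos_near[OF this True] obtain d where "d > 0" "\<forall>y\<in>{0..t}. dist y \<tau> < d \<longrightarrow> Ts y > 0" by blast
        then show ?thesis using that[of d] \<tau>0 by (auto simp: dist_real_def)
      next
        case False
        then have "Ts \<tau> \<le> 0" by simp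
        then obtain D where D: "D > 0" "(Ts has_real_derivative D) (at \<tau> within {0..t})"
          using KTs[of \<tau>] \<tau>0 \<tau>t nn by auto
        obtain d where d: "d > 0" "\<And>h. h > 0 \<Longrightarrow> \<tau> + h \<in> {0..t} \<Longrightarrow> h < d \<Longrightarrow> Ts \<tau> < Ts (\<tau> + h)"
          using has_real_derivative_pos_inc_right[OF D(2) D(1)] by blast
        show ?thesis
        proof (rule that[of d])
          show "d > 0" by fact
          fix v assume v: "\<tau> < v" "v < \<tau> + d" "v \<le> t"
          have "Ts \<tau> < Ts (\<tau> + (v - \<tau>))" using d(2)[of "v - \<tau>"] v \<tau>0 by auto
          then show "Ts v > 0" using nn by simp
        qed
      qed
      have posv: "Ta v > 0 \<and> Ts v > 0" if v: "\<tau> < v" "v < \<tau> + d1" "v \<le> t" for v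
      proof -
        have "Ta v > 0"
        proof (rule min_lemma[where a=\<tau> and b=v and t=t])
          show "continuous_on {\<tau>..v} Ta" using continuous_on_subset[OF contTa] \<tau>0 v by auto
          show "\<tau> < v" "0 \<le> \<tau>" "v \<le> t" using v \<tau>0 by auto
          show "Ta \<tau> \<ge> 0" using nn by simp
          fix w assume w: "w \<in> {\<tau><..v}" "Ta w \<le> 0"
          then have "Ts w > 0" using d1(2)[of w] v by auto
          then show "\<exists>D>0. (Ta has_real_derivative D) (at w within {0..t})"
            using KTa[of w] w v \<tau>0 by auto
        qed
        then show ?thesis using d1(2)[OF v] by simp
      qed
      have "Inf B < \<tau> + d1" using d1(1) unfolding \<tau>_def by simp
      then obtain b where b: "b \<in> B" "b < \<tau> + d1" using cInf_less_iff[of B] tB bdd by blast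
      have "\<tau> \<le> b" unfolding \<tau>_def using b(1) bdd by (rule cInf_lower)
      moreover have "b \<noteq> \<tau>" using b(1) False by auto
      ultimately have "\<tau> < b" by simp
      moreover have "b \<le> t" using b(1) unfolding B_def by auto
      ultimately have "Ta b > 0 \<and> Ts b > 0" using posv b(2) by blast
      then show False using b(1) unfolding B_def by auto
    qed
  qed
qed

end
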